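(* Let $\alpha=(\alpha^+,0,\dots,0)\in[0,\infty)^n$ with $\alpha^+\in(0,\infty)^l$, and let $\Lambda_\alpha=\begin{pmatrix}\Lambda_{\alpha^+}&0\\0&0\end{pmatrix}$. Let $\Gamma_1$ be a circle in $\mathbb{C}$ enclosing all entries of $\alpha^+$ but not $0$, and $\Gamma_0$ a circle enclosing $0$ but no entry of $\alpha^+$. For Hermitian $\tilde E$ (small enough that $\Lambda_\alpha+\tilde E$ has no eigenvalue on $\Gamma_0\cup\Gamma_1$) define $$P_i(\tilde E)=\frac{1}{2\pi i}\int_{\Gamma_i}(zI-(\Lambda_\alpha+\tilde E))^{-1}\,dz,\quad i=0,1,$$ and write $\tilde E=\begin{pmatrix}\tilde B&\tilde C\\ \tilde C^*&\tilde D\end{pmatrix}$ with respect to $\mathbb{C}^n=\mathbb{C}^l\oplus\mathbb{C}^{n-l}$. Then $$P_1(\tilde E)=\begin{pmatrix} I & \Lambda_{\alpha^+}^{-1}\tilde C\\ \tilde C^*\Lambda_{\alpha^+}^{-1} & 0\end{pmatrix}+O(\|\tilde E\|^2),\qquad P_0(\tilde E)=\begin{pmatrix} 0 & -\Lambda_{\alpha^+}^{-1}\tilde C\\ -\tilde C^*\Lambda_{\alpha^+}^{-1} & I\end{pmatrix}+O(\|\tilde E\|^2),$$ where the size of the errors is locally independent of $\alpha^+$ (the implicit constants and neighborhoods can be chosen uniformly for $\alpha^+$ in a neighborhood of the given one).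
   Context: $\Lambda_v$ denotes the diagonal matrix with the vector $v$ on its diagonal; $\|\cdot\|$ is any matrix norm. *)

theory Defs
  imports "HOL-Complex_Analysis.Complex_Analysis"
begin

definition diag_real :: "real^'n \<Rightarrow> complex^'n^'n" where
  "diag_real v = (\<chi> i j. if i = j then complex_of_real (v $ i) else 0)"

definition hermitian :: "complex^'n^'n \<Rightarrow> bool" where
  "hermitian E \<longleftrightarrow> (\<forall>i j. E $ i $ j = cnj (E $ j $ i))"

definition riesz_proj :: "(real \<Rightarrow> complex) \<Rightarrow> complex^'n^'n \<Rightarrow> complex^'n^'n" where
  "riesz_proj \<Gamma> A =
     (\<chi> i j. contour_integral \<Gamma> (\<lambda>z. matrix_inv (mat z - A) $ i $ j) / (2 * complex_of_real pi * \<i>))"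

text \<open>Block decomposition with respect to the index set S (the block of alpha^+) and its
  complement.\<close>
definition approx_P1 :: "'n set \<Rightarrow> real^'n \<Rightarrow> complex^'n^'n \<Rightarrow> complex^'n^'n" where
  "approx_P1 S a E = (\<chi> i j.
     if i \<in> S \<and> j \<in> S then (if i = j then 1 else 0)
     else if i \<in> S \<and> j \<notin> S then E $ i $ j / complex_of_real (a $ i)
     else if i \<notin> S \<and> j \<in> S then cnj (E $ j $ i) / complex_of_real (a $ j)
     else 0)"

definition approx_P0 :: "'n set \<Rightarrow> real^'n \<Rightarrow> complex^'n^'n \<Rightarrow> complex^'n^'n" where
  "approx_P0 S a E = (\<chi> i j.
     if i \<in> S \<and> j \<in> S then 0
     else if i \<in> S \<and> j \<notin> S then - (E $ i $ j / complex_of_real (a $ i))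
     else if i \<notin> S \<and> j \<in> S then - (cnj (E $ j $ i) / complex_of_real (a $ j))
     else (if i = j then 1 else 0))"

end

theory Submission imports Defs begin

no_notation fps_nth (infixl \<open>$\<close> 75)

definition l1 :: "complex^'n^'m \<Rightarrow> real" where
  "l1 X = (\<Sum>i\<in>UNIV. \<Sum>j\<in>UNIV. norm (X $ i $ j))"

lemma l1_nonneg: "0 \<le> l1 X"
  unfolding l1_def by (intro sum_nonneg norm_ge_zero)

lemma entry_le_l1: "norm (X $ i $ j) \<le> l1 X"
proof -
  have "norm (X $ i $ j) \<le> (\<Sum>j\<in>UNIV. norm (X $ i $ j))"
    by (rule member_le_sum) auto
  also have "\<dots> \<le> l1 X" unfolding l1_def
    by (rule member_le_sum[where f="\<lambda>i. \<Sum>j\<in>UNIV. norm (X $ i $ j)"]) (auto intro: sum_nonneg)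
  finally show ?thesis .
qed

lemma l1_add: "l1 (X + Y) \<le> l1 X + l1 Y"
  unfolding l1_def sum.distrib[symmetric]
  by (intro sum_mono) (simp add: norm_triangle_ineq)

lemma l1_diff: "l1 (X - Y) \<le> l1 X + l1 Y"
  unfolding l1_def sum.distrib[symmetric]
  by (intro sum_mono) (simp add: norm_triangle_ineq4)

lemma l1_eq0: "l1 X = 0 \<Longrightarrow> X = 0"
proof -
  assume "l1 X = 0"
  hence "\<forall>i j. norm (X $ i $ j) = 0"
    by (metis entry_le_l1 norm_ge_zero order_antisym)
  thus "X = 0" by (simp add: vec_eq_iff)
qed

lemma l1_mult: "l1 (X ** Y) \<le> l1 X * l1 Y"
proof -
  have "l1 (X ** Y) \<le> (\<Sum>i\<in>UNIV. \<Sum>j\<in>UNIV. \<Sum>k\<in>UNIV. norm (X$i$k) * norm (Y$k$j))"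
    unfolding l1_def matrix_matrix_mult_def
  proof (intro sum_mono)
    fix i j
    show "norm ((\<chi> i j. \<Sum>k\<in>UNIV. X $ i $ k * Y $ k $ j) $ i $ j) \<le> (\<Sum>k\<in>UNIV. norm (X$i$k) * norm (Y$k$j))"
      using norm_sum[of "\<lambda>k. X$i$k * Y$k$j" UNIV] by (simp add: norm_mult)
  qed
  also have "\<dots> = (\<Sum>i\<in>UNIV. \<Sum>k\<in>UNIV. \<Sum>j\<in>UNIV. norm (X$i$k) * norm (Y$k$j))"
    by (rule sum.cong[OF refl], rule sum.swap)
  also have "\<dots> = (\<Sum>i\<in>UNIV. \<Sum>k\<in>UNIV. norm (X$i$k) * (\<Sum>j\<in>UNIV. norm (Y$k$j)))"
    by (simp add: sum_distrib_left)
  also have "\<dots> \<le> (\<Sum>i\<in>UNIV. \<Sum>k\<in>UNIV. norm (X$i$k) * l1 Y)"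
  proof (intro sum_mono mult_left_mono)
    fix k
    show "(\<Sum>j\<in>UNIV. norm (Y$k$j)) \<le> l1 Y" unfolding l1_def
      by (rule member_le_sum[where f="\<lambda>i. \<Sum>j\<in>UNIV. norm (Y $ i $ j)"]) (auto intro: sum_nonneg)
  qed auto
  also have "\<dots> = l1 X * l1 Y" by (simp add: l1_def sum_distrib_right)
  finally show ?thesis .
qed

lemma norm_le_l1: "norm X \<le> l1 X"
proof -
  have "norm X \<le> (\<Sum>i\<in>UNIV. norm (X $ i))"
    by (simp add: norm_vec_def L2_set_le_sum)
  also have "\<dots> \<le> l1 X" unfolding l1_def
    by (intro sum_mono) (simp add: norm_vec_def L2_set_le_sum)
  finally show ?thesis .
qed

lemma l1_le_norm: "l1 X \<le> real CARD('n) * real CARD('m) * norm (X :: complex^'n^'m)"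
proof -
  have "l1 X \<le> (\<Sum>i\<in>(UNIV::'m set). \<Sum>j\<in>(UNIV::'n set). norm X)"
    unfolding l1_def
  proof (intro sum_mono)
    fix i j
    have "norm (X$i$j) \<le> norm (X$i)" unfolding norm_vec_def by (rule member_le_L2_set) simp_all
    also have "\<dots> \<le> norm X" unfolding norm_vec_def[of X] by (rule member_le_L2_set) simp_all
    finally show "norm (X$i$j) \<le> norm X" .
  qed

  thus ?thesis by (simp add: mult_ac)
qed

lemma l1_mat: "l1 (mat c :: complex^'n^'n) = real CARD('n) * norm c"
  unfolding l1_def mat_def by (simp add: if_distrib cong: if_cong)

lemma mult_sub_left: "(A::'a::ring_1^'n^'m) ** (B - C) = A ** B - A ** C"
  by (simp add: matrix_matrix_mult_def vec_eq_iff sum_subtractf algebra_simps)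
lemma mult_sub_right: "((B - C)::'a::ring_1^'n^'m) ** A = B ** A - C ** A"
  by (simp add: matrix_matrix_mult_def vec_eq_iff sum_subtractf algebra_simps)
lemma mult_add_right: "((B + C)::'a::ring_1^'n^'m) ** A = B ** A + C ** A"
  by (simp add: matrix_matrix_mult_def vec_eq_iff sum.distrib algebra_simps)


definition diagm :: "('n \<Rightarrow> complex) \<Rightarrow> complex^'n^'n" where
  "diagm d = (\<chi> i j. if i = j then d i else 0)"

lemma diagm_mult: "(diagm d ** X) $ i $ j = d i * X $ i $ j"
proof -
  have "(diagm d ** X) $ i $ j = (\<Sum>k\<in>UNIV. (if i = k then d i else 0) * X $ k $ j)"
    unfolding diagm_def matrix_matrix_mult_def by simp
  also have "\<dots> = (\<Sum>k\<in>UNIV. if i = k then d i * X $ k $ j else 0)"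
    by (rule sum.cong) auto
  finally show ?thesis by simp
qed

lemma mult_diagm: "(X ** diagm d) $ i $ j = X $ i $ j * d j"
proof -
  have "(X ** diagm d) $ i $ j = (\<Sum>k\<in>UNIV. X $ i $ k * (if k = j then d k else 0))"
    unfolding diagm_def matrix_matrix_mult_def by simp
  also have "\<dots> = (\<Sum>k\<in>UNIV. if k = j then X $ i $ j * d j else 0)"
    by (rule sum.cong) auto
  finally show ?thesis by simp
qed

lemma l1_diagm: "l1 (diagm d) = (\<Sum>i\<in>UNIV. norm (d i))"
  unfolding l1_def diagm_def by (simp add: if_distrib cong: if_cong)

lemma matrix_inv_props:
  fixes A :: "'a::field^'n^'n"
  assumes "invertible A"
  shows "A ** matrix_inv A = mat 1" "matrix_inv A ** A = mat 1"
proof -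
  have "\<exists>A'. A ** A' = mat 1 \<and> A' ** A = mat 1" using assms by (simp add: invertible_def)
  hence "A ** matrix_inv A = mat 1 \<and> matrix_inv A ** A = mat 1"
    unfolding matrix_inv_def by (rule someI_ex)
  thus "A ** matrix_inv A = mat 1" "matrix_inv A ** A = mat 1" by auto
qed

lemma inv_pert:
  fixes Z E R0 :: "complex^'n^'n"
  assumes R0: "R0 ** Z = mat 1" and sm: "l1 R0 * l1 E < 1"
  shows "invertible (Z - E)"
proof -
  have "\<forall>x. (Z - E) *v x = 0 \<longrightarrow> x = 0"
  proof (intro allI impI)
    fix x :: "complex^'n"
    assume x: "(Z - E) *v x = 0"
    define V :: "complex^'n^'n" where "V = (\<chi> i j. x $ i)"
    have "(Z - E) ** V = 0"
      using x by (simp add: V_def vec_eq_iff matrix_matrix_mult_def matrix_vector_mult_def)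
    hence ZV: "Z ** V = E ** V" by (simp add: mult_sub_right)
    have "V = R0 ** Z ** V" by (simp add: R0)
    also have "\<dots> = R0 ** (E ** V)" by (simp add: matrix_mul_assoc[symmetric] ZV)
    finally have "V = R0 ** (E ** V)" .
    hence "l1 V = l1 (R0 ** (E ** V))" by (rule arg_cong)
    also have "\<dots> \<le> l1 R0 * l1 (E ** V)" by (rule l1_mult)
    also have "\<dots> \<le> l1 R0 * (l1 E * l1 V)" by (rule mult_left_mono[OF l1_mult l1_nonneg])
    finally have "l1 V \<le> l1 R0 * (l1 E * l1 V)" .
    hence "l1 V * (1 - l1 R0 * l1 E) \<le> 0" by (simp add: algebra_simps)
    hence "l1 V \<le> 0" using sm by (simp add: mult_le_0_iff)
    hence "V = 0" using l1_nonneg[of V] l1_eq0 by auto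
    thus "x = 0" by (simp add: V_def vec_eq_iff)
  qed
  hence "inj ((*v) (Z - E))" by (simp add: vec.inj_iff_eq_0)
  thus ?thesis unfolding invertible_left_inverse matrix_left_invertible_injective .
qed

lemma resolvent_id:
  fixes Z E R0 R :: "complex^'n^'n"
  assumes R0: "R0 ** Z = mat 1" and R: "(Z - E) ** R = mat 1"
  shows "R = R0 + R0 ** E ** R"
proof -
  have "R0 = R0 ** ((Z - E) ** R)" by (simp add: R)
  also have "\<dots> = R - R0 ** E ** R"
    by (simp add: matrix_mul_assoc mult_sub_left mult_sub_right R0)
  finally have h: "R0 = R - R0 ** E ** R" .
  have "R0 + R0 ** E ** R = R - R0 ** E ** R + R0 ** E ** R"
    by (rule arg_cong[where f="\<lambda>X. X + R0 ** E ** R", OF h])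
  thus ?thesis by simp
qed

lemma resolvent_id2:
  fixes Z E R0 R :: "complex^'n^'n"
  assumes R0: "R0 ** Z = mat 1" and R: "(Z - E) ** R = mat 1"
  shows "R = R0 + R0 ** E ** R0 + R0 ** E ** R0 ** E ** R"
proof -
  have 1: "R = R0 + R0 ** E ** R" by (rule resolvent_id[OF R0 R])
  have "R0 ** E ** R = R0 ** E ** (R0 + R0 ** E ** R)" by (rule arg_cong[where f="\<lambda>X. R0 ** E ** X", OF 1])
  also have "\<dots> = R0 ** E ** R0 + R0 ** E ** R0 ** E ** R"
    by (simp add: matrix_add_ldistrib matrix_mul_assoc)
  finally have 2: "R0 ** E ** R = R0 ** E ** R0 + R0 ** E ** R0 ** E ** R" .
  have "R = R0 + R0 ** E ** R" by (rule 1)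
  also have "\<dots> = R0 + (R0 ** E ** R0 + R0 ** E ** R0 ** E ** R)"
    by (rule arg_cong[where f="\<lambda>X. R0 + X", OF 2])
  finally show ?thesis by (simp only: add.assoc)
qed

lemma resolvent_bound:
  fixes Z E R0 R :: "complex^'n^'n"
  assumes R0: "R0 ** Z = mat 1" and R: "(Z - E) ** R = mat 1" and sm: "l1 R0 * l1 E \<le> 1/2"
  shows "l1 R \<le> 2 * l1 R0"
proof -
  have "l1 R = l1 (R0 + R0 ** E ** R)" by (rule arg_cong[OF resolvent_id[OF R0 R]])
  also have "\<dots> \<le> l1 R0 + l1 (R0 ** E ** R)" by (rule l1_add)
  also have "l1 (R0 ** E ** R) \<le> l1 R0 * l1 E * l1 R"
    using l1_mult[of "R0 ** E" R] mult_right_mono[OF l1_mult[of R0 E] l1_nonneg[of R]] by linarith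
  also have "\<dots> \<le> 1/2 * l1 R" by (rule mult_right_mono[OF sm l1_nonneg])
  finally show ?thesis by simp
qed

lemma l1_mult5: "l1 (A ** B ** C ** D ** F) \<le> l1 A * l1 B * l1 C * l1 D * l1 F"
proof -
  have "l1 (A ** B ** C ** D ** F) \<le> l1 (A ** B ** C ** D) * l1 F" by (rule l1_mult)
  also have "\<dots> \<le> l1 (A ** B ** C) * l1 D * l1 F"
    by (rule mult_right_mono[OF l1_mult l1_nonneg])
  also have "\<dots> \<le> l1 (A ** B) * l1 C * l1 D * l1 F"
    by (intro mult_right_mono l1_mult l1_nonneg)
  also have "\<dots> \<le> l1 A * l1 B * l1 C * l1 D * l1 F"
    by (intro mult_right_mono l1_mult l1_nonneg)
  finally show ?thesis .
qed

lemma prod5_mono: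
  fixes a b c d f a' b' c' d' f' :: real
  assumes "0 \<le> a" "a \<le> a'" "0 \<le> b" "b \<le> b'" "0 \<le> c" "c \<le> c'" "0 \<le> d" "d \<le> d'" "0 \<le> f" "f \<le> f'"
  shows "a * b * c * d * f \<le> a' * b' * c' * d' * f'"
proof -
  have 1: "a * b \<le> a' * b'" using assms by (intro mult_mono) auto
  have 2: "a * b * c \<le> a' * b' * c'" using assms 1 by (intro mult_mono) auto
  have 3: "a * b * c * d \<le> a' * b' * c' * d'" using assms 2 by (intro mult_mono) auto
  show ?thesis using assms 3 by (intro mult_mono) auto
qed

definition wn :: "complex \<Rightarrow> real \<Rightarrow> complex \<Rightarrow> complex" where
  "wn c r b = (if cmod (b - c) < r then 1 else 0)"

lemma not_on_circle: "cmod (b - c) \<noteq> r \<Longrightarrow> r > 0 \<Longrightarrow> b \<notin> path_image (circlepath c r)"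
  by (simp add: dist_norm norm_minus_commute)

lemma wind:
  assumes r: "r > 0" and b: "cmod (b - c) \<noteq> r"
  shows "winding_number (circlepath c r) b = wn c r b"
proof (cases "cmod (b - c) < r")
  case True thus ?thesis by (simp add: wn_def winding_number_circlepath)
next
  case False
  hence out: "b \<notin> cball c r" using b by (auto simp: dist_norm norm_minus_commute)
  have "winding_number (circlepath c r) b = 0"
    by (rule winding_number_zero_outside[OF _ convex_cball _ out]) (use r in \<open>auto simp: dist_norm\<close>)
  thus ?thesis using False by (simp add: wn_def)
qed

lemma int1:
  assumes r: "r > 0" and b: "cmod (b - c) \<noteq> r"
  shows "((\<lambda>z. 1 / (z - b)) has_contour_integral complex_of_real (2 * pi) * \<i> * wn c r b) (circlepath c r)"
  using has_contour_integral_winding_number[OF valid_path_circlepath not_on_circle[OF b r]] wind[OF r b]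
  by simp

lemma int_sq:
  assumes r: "r > 0" and b: "cmod (b - c) \<noteq> r"
  shows "((\<lambda>z. 1 / ((z - b) * (z - b))) has_contour_integral 0) (circlepath c r)"
proof (rule Cauchy_theorem_primitive[where S="- {b}" and f="\<lambda>z. - 1 / (z - b)"])
  fix x assume "x \<in> - {b}"
  hence "x - b \<noteq> 0" by auto
  thus "((\<lambda>z. - 1 / (z - b)) has_field_derivative 1 / ((x - b) * (x - b))) (at x within - {b})"
    by (auto intro!: derivative_eq_intros simp: field_simps power2_eq_square)
next
  show "path_image (circlepath c r) \<subseteq> - {b}" using not_on_circle[OF b r] by auto
qed auto

lemma int2:
  assumes r: "r > 0" and a: "cmod (a - c) \<noteq> r" and b: "cmod (b - c) \<noteq> r"
  shows "((\<lambda>z. 1 / ((z - a) * (z - b))) has_contour_integral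
           complex_of_real (2 * pi) * \<i> * ((wn c r a - wn c r b) / (a - b))) (circlepath c r)"
proof (cases "a = b")
  case True thus ?thesis using int_sq[OF r b] by simp
next
  case False
  define K where "K = complex_of_real (2 * pi) * \<i>"
  have h: "((\<lambda>z. 1 / (a - b) * (1 / (z - a) - 1 / (z - b))) has_contour_integral
           1 / (a - b) * (K * wn c r a - K * wn c r b)) (circlepath c r)"
    unfolding K_def by (intro has_contour_integral_lmul has_contour_integral_diff int1 r a b)
  have h2: "((\<lambda>z. 1 / ((z - a) * (z - b))) has_contour_integral
           1 / (a - b) * (K * wn c r a - K * wn c r b)) (circlepath c r)"
  proof (rule has_contour_integral_eq[OF h])
    fix z assume z: "z \<in> path_image (circlepath c r)"
    have "z \<noteq> a" using z not_on_circle[OF a r] by auto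
    moreover have "z \<noteq> b" using z not_on_circle[OF b r] by auto
    ultimately show "1 / (a - b) * (1 / (z - a) - 1 / (z - b)) = 1 / ((z - a) * (z - b))"
      using False by (simp add: field_simps)
  qed
  have eq: "1 / (a - b) * (K * wn c r a - K * wn c r b) = K * ((wn c r a - wn c r b) / (a - b))"
    by (simp add: field_simps)
  from h2[unfolded eq] show ?thesis by (simp only: K_def)
qed

lemma mat_diff: "(mat w - mat z :: complex^'n^'n) = mat (w - z)"
  by (simp add: vec_eq_iff mat_def)

lemma circle_main:
  fixes \<beta> :: "real^'n" and E :: "complex^'n^'n" and c :: complex
  assumes r: "r > 0" and e: "e > 0"
    and gap: "\<And>z i. cmod (z - c) = r \<Longrightarrow> e \<le> cmod (z - complex_of_real (\<beta> $ i))"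
    and small: "real CARD('n) ^ 3 * norm E \<le> e / 2"
  shows "(\<forall>z\<in>path_image (circlepath c r). invertible (mat z - (diag_real \<beta> + E))) \<and>
    norm (riesz_proj (circlepath c r) (diag_real \<beta> + E) -
      (\<chi> i j. (if i = j then wn c r (complex_of_real (\<beta> $ i)) else 0) +
          E $ i $ j * ((wn c r (complex_of_real (\<beta> $ i)) - wn c r (complex_of_real (\<beta> $ j))) /
                       (complex_of_real (\<beta> $ i) - complex_of_real (\<beta> $ j)))))
    \<le> real CARD('n) ^ 2 * (2 * real CARD('n) ^ 7 / e ^ 3) * (norm E)\<^sup>2 * r"
proof -
  define N where "N = real CARD('n)"
  have N1: "N \<ge> 1" unfolding N_def using card_gt_0_iff[of "UNIV :: 'n set"] by simp
  define b where "b i = complex_of_real (\<beta> $ i)" for i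
  define R0 where "R0 z = diagm (\<lambda>i. 1 / (z - b i))" for z
  define Z where "Z z = mat z - diag_real \<beta>" for z :: complex
  define R where "R z = matrix_inv (Z z - E)" for z
  have Zeq: "mat z - (diag_real \<beta> + E) = Z z - E" for z by (simp add: Z_def algebra_simps)
  have onS: "cmod (z - c) = r" if "z \<in> path_image (circlepath c r)" for z
    using that r by (simp add: dist_norm norm_minus_commute)
  have nz: "z - b i \<noteq> 0" if "cmod (z - c) = r" for z i
    using gap[OF that, of i] e unfolding b_def by auto
  have R0Z: "R0 z ** Z z = mat 1" if "cmod (z - c) = r" for z
    using nz[OF that]
    by (simp add: vec_eq_iff R0_def diagm_mult Z_def mat_def diag_real_def b_def)
  have l1R0: "l1 (R0 z) \<le> N / e" if "cmod (z - c) = r" for z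
  proof -
    have "l1 (R0 z) = (\<Sum>i\<in>UNIV. 1 / cmod (z - b i))"
      by (simp add: R0_def l1_diagm norm_divide)
    also have "\<dots> \<le> (\<Sum>i\<in>(UNIV::'n set). 1 / e)"
    proof (intro sum_mono)
      fix i
      have g: "e \<le> cmod (z - b i)" using gap[OF that, of i] by (simp add: b_def)
      hence "0 < cmod (z - b i) * e" using e by (intro mult_pos_pos) auto
      from divide_left_mono[OF g zero_le_one this] show "1 / cmod (z - b i) \<le> 1 / e" .
    qed
    also have "\<dots> = N / e" by (simp add: N_def)
    finally show ?thesis .
  qed
  have l1E: "l1 E \<le> N * N * norm E" using l1_le_norm[of E] by (simp add: N_def)
  have NE: "N / e * (N * N * norm E) \<le> 1 / 2"
  proof -
    have "N / e * (N * N * norm E) = (N ^ 3 * norm E) / e" by (simp add: power3_eq_cube)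
    also have "\<dots> \<le> (e / 2) / e" by (rule divide_right_mono) (use small e in \<open>auto simp: N_def\<close>)
    also have "\<dots> = 1 / 2" using e by simp
    finally show ?thesis .
  qed
  have sm: "l1 (R0 z) * l1 E \<le> 1 / 2" if "cmod (z - c) = r" for z
  proof -
    have "l1 (R0 z) * l1 E \<le> N / e * (N * N * norm E)"
      by (rule mult_mono[OF l1R0[OF that] l1E]) (use N1 e l1_nonneg in auto)
    thus ?thesis using NE by linarith
  qed
  have inv: "invertible (Z z - E)" if "cmod (z - c) = r" for z
    by (rule inv_pert[OF R0Z[OF that]]) (use sm[OF that] in linarith)
  have RR1: "(Z z - E) ** R z = mat 1" and RR2: "R z ** (Z z - E) = mat 1" if "cmod (z - c) = r" for z
    using matrix_inv_props[OF inv[OF that]] by (simp_all add: R_def)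
  have l1R: "l1 (R z) \<le> 2 * (N / e)" if "cmod (z - c) = r" for z
    using resolvent_bound[OF R0Z[OF that] RR1[OF that] sm[OF that]] l1R0[OF that] by linarith
  have Rdiff: "R z - R w = R z ** mat (w - z) ** R w"
    if z: "cmod (z - c) = r" and w: "cmod (w - c) = r" for z w
  proof -
    have "R z - R w = R z ** ((Z w - E) ** R w) - (R z ** (Z z - E)) ** R w"
      by (simp add: RR1[OF w] RR2[OF z])
    also have "\<dots> = R z ** ((Z w - E) - (Z z - E)) ** R w"
      by (simp add: matrix_mul_assoc mult_sub_left mult_sub_right)
    also have "(Z w - E) - (Z z - E) = mat (w - z)"
      by (simp add: Z_def mat_diff[symmetric])
    finally show ?thesis .
  qed
  define L where "L = 2 * (N / e) * N * (2 * (N / e))"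
  have lipR: "cmod (R z $ i $ j - R w $ i $ j) \<le> L * cmod (z - w)"
    if z: "cmod (z - c) = r" and w: "cmod (w - c) = r" for z w i j
  proof -
    have "cmod (R z $ i $ j - R w $ i $ j) = cmod ((R z - R w) $ i $ j)" by simp
    also have "\<dots> \<le> l1 (R z - R w)" by (rule entry_le_l1)
    also have "\<dots> = l1 (R z ** mat (w - z) ** R w)" by (simp add: Rdiff[OF z w])
    also have "\<dots> \<le> l1 (R z ** mat (w - z)) * l1 (R w)" by (rule l1_mult)
    also have "\<dots> \<le> l1 (R z) * l1 (mat (w - z) :: complex^'n^'n) * l1 (R w)"
      by (rule mult_right_mono[OF l1_mult l1_nonneg])
    also have "\<dots> \<le> 2 * (N / e) * (N * cmod (z - w)) * (2 * (N / e))"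
      using l1R[OF z] l1R[OF w] l1_nonneg[of "R z"] l1_nonneg[of "R w"] e
      by (intro mult_mono) (auto simp: l1_mat N_def norm_minus_commute)
    also have "\<dots> = L * cmod (z - w)" by (simp add: L_def)
    finally show ?thesis .
  qed
  have Lpos: "0 \<le> L" unfolding L_def using N1 e by simp
  have contR: "continuous_on (path_image (circlepath c r)) (\<lambda>z. R z $ i $ j)" for i j
  proof (rule lipschitz_on_continuous_on)
    show "L-lipschitz_on (path_image (circlepath c r)) (\<lambda>z. R z $ i $ j)"
      unfolding lipschitz_on_def using Lpos lipR onS by (auto simp: dist_norm)
  qed
  define T where "T z = R0 z ** E ** R0 z ** E ** R z" for z
  define B where "B = 2 * N ^ 7 / e ^ 3 * (norm E)\<^sup>2"
  have Bpos: "0 \<le> B" unfolding B_def using N1 e by simp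
  have l1T: "l1 (T z) \<le> B" if z: "cmod (z - c) = r" for z
  proof -
    have "l1 (T z) \<le> l1 (R0 z) * l1 E * l1 (R0 z) * l1 E * l1 (R z)"
      unfolding T_def by (rule l1_mult5)
    also have "\<dots> \<le> (N / e) * (N * N * norm E) * (N / e) * (N * N * norm E) * (2 * (N / e))"
      by (rule prod5_mono) (use l1R0[OF z] l1E l1R[OF z] l1_nonneg in auto)
    also have "\<dots> = B" unfolding B_def by (simp add: field_simps eval_nat_numeral)
    finally show ?thesis .
  qed
  have Rid: "R z = R0 z + R0 z ** E ** R0 z + T z" if z: "cmod (z - c) = r" for z
    unfolding T_def by (rule resolvent_id2[OF R0Z[OF z] RR1[OF z]])
  have entry: "R z $ i $ j = (if i = j then 1 / (z - b i) else 0) + E $ i $ j * (1 / ((z - b i) * (z - b j))) + T z $ i $ j"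
    if z: "cmod (z - c) = r" for z i j
  proof -
    have "R z $ i $ j = R0 z $ i $ j + (R0 z ** E ** R0 z) $ i $ j + T z $ i $ j"
      by (subst Rid[OF z]) simp
    moreover have "R0 z $ i $ j = (if i = j then 1 / (z - b i) else 0)"
      by (simp add: R0_def diagm_def)
    moreover have "(R0 z ** E ** R0 z) $ i $ j = E $ i $ j * (1 / ((z - b i) * (z - b j)))"
      by (simp add: R0_def diagm_mult mult_diagm mult_ac)
    ultimately show ?thesis by simp
  qed
  have boff: "cmod (b i - c) \<noteq> r" for i
  proof
    assume "cmod (b i - c) = r"
    from gap[OF this, of i] e show False by (simp add: b_def)
  qed
  define K where "K = complex_of_real (2 * pi) * \<i>"
  have K0: "K \<noteq> 0" by (simp add: K_def)
  have normK: "norm K = 2 * pi" by (simp add: K_def norm_mult)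
  define tgt :: "complex^'n^'n" where "tgt = (\<chi> i j. (if i = j then wn c r (complex_of_real (\<beta> $ i)) else 0) +
          E $ i $ j * ((wn c r (complex_of_real (\<beta> $ i)) - wn c r (complex_of_real (\<beta> $ j))) /
                       (complex_of_real (\<beta> $ i) - complex_of_real (\<beta> $ j))))"
  define P where "P = riesz_proj (circlepath c r) (diag_real \<beta> + E)"
  have entry_bound: "norm ((P - tgt) $ i $ j) \<le> B * r" for i j
  proof -
    define I0 where "I0 = (if i = j then K * wn c r (b i) else 0)"
    define I1 where "I1 = E $ i $ j * (K * ((wn c r (b i) - wn c r (b j)) / (b i - b j)))"
    define If where "If = contour_integral (circlepath c r) (\<lambda>z. R z $ i $ j)"
    have h0: "((\<lambda>z. if i = j then 1 / (z - b i) else 0) has_contour_integral I0) (circlepath c r)"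
    proof (cases "i = j")
      case True thus ?thesis using int1[OF r boff[of i]] by (simp add: I0_def K_def)
    next
      case False thus ?thesis using has_contour_integral_0 by (simp add: I0_def)
    qed
    have h1: "((\<lambda>z. E $ i $ j * (1 / ((z - b i) * (z - b j)))) has_contour_integral I1) (circlepath c r)"
      unfolding I1_def K_def by (intro has_contour_integral_lmul int2 r boff)
    have hf: "((\<lambda>z. R z $ i $ j) has_contour_integral If) (circlepath c r)"
      unfolding If_def by (rule has_contour_integral_integral[OF contour_integrable_continuous_circlepath[OF contR]])
    have hT: "((\<lambda>z. R z $ i $ j - (if i = j then 1 / (z - b i) else 0) - E $ i $ j * (1 / ((z - b i) * (z - b j))))
               has_contour_integral (If - I0 - I1)) (circlepath c r)"
      by (intro has_contour_integral_diff hf h0 h1)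
    have bnd: "norm (If - I0 - I1) \<le> B * (2 * pi * r)"
    proof (rule has_contour_integral_bound_circlepath[OF hT Bpos r])
      fix x assume x: "norm (x - c) = r"
      have "R x $ i $ j - (if i = j then 1 / (x - b i) else 0) - E $ i $ j * (1 / ((x - b i) * (x - b j)))
            = T x $ i $ j" using entry[OF x, of i j] by simp
      also have "norm \<dots> \<le> l1 (T x)" by (rule entry_le_l1)
      also have "\<dots> \<le> B" by (rule l1T[OF x])
      finally show "norm (R x $ i $ j - (if i = j then 1 / (x - b i) else 0) - E $ i $ j * (1 / ((x - b i) * (x - b j)))) \<le> B" .
    qed
    have Pij: "P $ i $ j = If / K"
      by (simp add: P_def riesz_proj_def If_def R_def Zeq K_def mult_ac)
    have tij: "tgt $ i $ j = I0 / K + I1 / K"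
      using K0 by (simp add: tgt_def I0_def I1_def b_def)
    have "(P - tgt) $ i $ j = (If - I0 - I1) / K"
      using Pij tij by (simp add: diff_divide_distrib)
    hence "norm ((P - tgt) $ i $ j) = norm (If - I0 - I1) / (2 * pi)"
      by (simp add: norm_divide normK)
    also have "\<dots> \<le> B * (2 * pi * r) / (2 * pi)" by (rule divide_right_mono[OF bnd]) simp
    also have "\<dots> = B * r" by simp
    finally show ?thesis .
  qed
  have "norm (P - tgt) \<le> l1 (P - tgt)" by (rule norm_le_l1)
  also have "\<dots> \<le> (\<Sum>i\<in>(UNIV::'n set). \<Sum>j\<in>(UNIV::'n set). B * r)"
    unfolding l1_def by (intro sum_mono entry_bound)
  also have "\<dots> = N ^ 2 * (2 * N ^ 7 / e ^ 3) * (norm E)\<^sup>2 * r"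
    by (simp add: N_def B_def power2_eq_square mult_ac)
  finally have main: "norm (P - tgt) \<le> N ^ 2 * (2 * N ^ 7 / e ^ 3) * (norm E)\<^sup>2 * r" .
  have invs: "\<forall>z\<in>path_image (circlepath c r). invertible (mat z - (diag_real \<beta> + E))"
  proof
    fix z assume "z \<in> path_image (circlepath c r)"
    from inv[OF onS[OF this]] show "invertible (mat z - (diag_real \<beta> + E))" by (simp only: Zeq)
  qed
  show ?thesis using invs main unfolding P_def tgt_def N_def by simp
qed

lemma tri1: "cmod (z - c) - cmod (b - c) \<le> cmod (z - (b::complex))"
  using norm_triangle_ineq[of "z - b" "b - c"] by simp

lemma tri2: "cmod (b - c) - cmod (z - c) \<le> cmod (z - (b::complex))"
  using norm_triangle_ineq[of "b - z" "z - c"] by (simp add: norm_minus_commute)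

lemma of_real_dist: "cmod (complex_of_real x - complex_of_real y) = \<bar>x - y\<bar>"
  by (metis norm_of_real of_real_diff)

lemma finite_pos_bound:
  assumes "finite S" "\<forall>i\<in>S. 0 < f i" "(0::real) < a"
  shows "\<exists>e>0. e \<le> a \<and> (\<forall>i\<in>S. e \<le> f i)"
proof (intro exI conjI ballI)
  let ?M = "Min (insert a (f ` S))"
  show "0 < ?M" using assms by (simp add: Min_gr_iff)
  show "?M \<le> a" using assms by simp
  fix i assume "i \<in> S" thus "?M \<le> f i" using assms by simp
qed

theorem lemma3p2:
  fixes \<alpha> :: "real^'n" and S :: "'n set"
    and c1 c0 :: complex and r1 r0 :: real
  assumes alpha_pos: "\<forall>i\<in>S. \<alpha> $ i > 0"
    and alpha_zero: "\<forall>i. i \<notin> S \<longrightarrow> \<alpha> $ i = 0"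
    and r1: "r1 > 0" and G1_encl: "\<forall>i\<in>S. cmod (complex_of_real (\<alpha> $ i) - c1) < r1"
    and G1_excl: "cmod (0 - c1) > r1"
    and r0: "r0 > 0" and G0_encl: "cmod (0 - c0) < r0"
    and G0_excl: "\<forall>i\<in>S. cmod (complex_of_real (\<alpha> $ i) - c0) > r0"
  shows "\<exists>\<rho>>0. \<exists>\<delta>>0. \<exists>K. \<forall>(\<beta>::real^'n) (E::complex^'n^'n).
           (\<forall>i\<in>S. \<beta> $ i > 0 \<and> \<bar>\<beta> $ i - \<alpha> $ i\<bar> < \<rho>) \<and> (\<forall>i. i \<notin> S \<longrightarrow> \<beta> $ i = 0)
           \<and> hermitian E \<and> norm E < \<delta> \<longrightarrow>
           (\<forall>z \<in> path_image (circlepath c0 r0) \<union> path_image (circlepath c1 r1).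
               invertible (mat z - (diag_real \<beta> + E)))
         \<and> norm (riesz_proj (circlepath c1 r1) (diag_real \<beta> + E) - approx_P1 S \<beta> E) \<le> K * (norm E)\<^sup>2
         \<and> norm (riesz_proj (circlepath c0 r0) (diag_real \<beta> + E) - approx_P0 S \<beta> E) \<le> K * (norm E)\<^sup>2"
proof -
  define N where "N = real CARD('n)"
  have N1: "N \<ge> 1" unfolding N_def using card_gt_0_iff[of "UNIV :: 'n set"] by simp
  define g where "g i = min (r1 - cmod (complex_of_real (\<alpha> $ i) - c1)) (cmod (complex_of_real (\<alpha> $ i) - c0) - r0)" for i
  define a where "a = min (cmod (0 - c1) - r1) (r0 - cmod (0 - c0))"
  have gpos: "\<forall>i\<in>S. 0 < g i" using G1_encl G0_excl by (auto simp: g_def)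
  have apos: "0 < a" using G1_excl G0_encl by (auto simp: a_def)
  obtain e2 where e2: "e2 > 0" "e2 \<le> a" "\<forall>i\<in>S. e2 \<le> g i"
    using finite_pos_bound[OF finite gpos apos] by blast
  define e where "e = e2 / 2"
  have e: "e > 0" using e2 by (simp add: e_def)
  have eS1: "r1 - cmod (complex_of_real (\<alpha> $ i) - c1) \<ge> 2 * e" if "i \<in> S" for i
    using e2(3) that by (auto simp: e_def g_def)
  have eS0: "cmod (complex_of_real (\<alpha> $ i) - c0) - r0 \<ge> 2 * e" if "i \<in> S" for i
    using e2(3) that by (auto simp: e_def g_def)
  have ea1: "cmod c1 - r1 \<ge> e" and ea0: "r0 - cmod c0 \<ge> e"
    using e2(1,2) by (auto simp: e_def a_def)
  define C where "C = N ^ 2 * (2 * N ^ 7 / e ^ 3)"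
  have Cpos: "C \<ge> 0" unfolding C_def using e N1 by simp
  have d: "e / (2 * N ^ 3) > 0" using e N1 by simp
  show ?thesis
    apply (rule exI[of _ e], rule conjI[OF e])
    apply (rule exI[of _ "e / (2 * N ^ 3)"], rule conjI[OF d])
    apply (rule exI[of _ "C * (r0 + r1)"])
  proof (intro allI impI conjI)
    fix \<beta> :: "real^'n" and E :: "complex^'n^'n"
    assume H: "(\<forall>i\<in>S. \<beta> $ i > 0 \<and> \<bar>\<beta> $ i - \<alpha> $ i\<bar> < e) \<and> (\<forall>i. i \<notin> S \<longrightarrow> \<beta> $ i = 0)
           \<and> hermitian E \<and> norm E < e / (2 * N ^ 3)"
    have bpos: "\<beta> $ i > 0" and bclose: "\<bar>\<beta> $ i - \<alpha> $ i\<bar> < e" if "i \<in> S" for i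
      using H that by auto
    have bzero: "\<beta> $ i = 0" if "i \<notin> S" for i using H that by auto
    have herm: "E $ i $ j = cnj (E $ j $ i)" if "i \<notin> S" "j \<in> S" for i j
      using H unfolding hermitian_def by blast
    have small: "real CARD('n) ^ 3 * norm E \<le> e / 2"
    proof -
      have "N ^ 3 * norm E \<le> N ^ 3 * (e / (2 * N ^ 3))"
        using H N1 by (intro mult_left_mono) auto
      also have "\<dots> = e / 2" using N1 by simp
      finally show ?thesis by (simp add: N_def)
    qed
    have bc1: "cmod (complex_of_real (\<beta> $ i) - c1) < r1 - e" if "i \<in> S" for i
    proof -
      have "cmod (complex_of_real (\<beta> $ i) - c1) \<le> cmod (complex_of_real (\<alpha> $ i) - c1) + cmod (complex_of_real (\<beta> $ i) - complex_of_real (\<alpha> $ i))"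
        using norm_triangle_ineq[of "complex_of_real (\<beta> $ i) - complex_of_real (\<alpha> $ i)" "complex_of_real (\<alpha> $ i) - c1"]
        by (simp add: add.commute)
      thus ?thesis using eS1[OF that] bclose[OF that] by (simp add: of_real_dist)
    qed
    have bc0: "cmod (complex_of_real (\<beta> $ i) - c0) > r0 + e" if "i \<in> S" for i
    proof -
      have "cmod (complex_of_real (\<alpha> $ i) - c0) \<le> cmod (complex_of_real (\<beta> $ i) - c0) + cmod (complex_of_real (\<alpha> $ i) - complex_of_real (\<beta> $ i))"
        using norm_triangle_ineq[of "complex_of_real (\<alpha> $ i) - complex_of_real (\<beta> $ i)" "complex_of_real (\<beta> $ i) - c0"]
        by (simp add: add.commute)
      moreover have "cmod (complex_of_real (\<alpha> $ i) - complex_of_real (\<beta> $ i)) < e"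
        using bclose[OF that] by (simp add: of_real_dist abs_minus_commute)
      ultimately show ?thesis using eS0[OF that] by simp
    qed
    have gap1: "e \<le> cmod (z - complex_of_real (\<beta> $ i))" if z: "cmod (z - c1) = r1" for z i
    proof (cases "i \<in> S")
      case True thus ?thesis using tri1[of z c1 "complex_of_real (\<beta> $ i)"] bc1[OF True] z by simp
    next
      case False thus ?thesis using tri2[of 0 c1 z] ea1 z bzero[OF False] by (simp add: norm_minus_commute)
    qed
    have gap0: "e \<le> cmod (z - complex_of_real (\<beta> $ i))" if z: "cmod (z - c0) = r0" for z i
    proof (cases "i \<in> S")
      case True thus ?thesis using tri2[of "complex_of_real (\<beta> $ i)" c0 z] bc0[OF True] z by simp
    next
      case False thus ?thesis using tri1[of z c0 0] ea0 z bzero[OF False] by (simp add: norm_minus_commute)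
    qed
    note M1 = circle_main[where c=c1, OF r1 e gap1 small]
    note M0 = circle_main[where c=c0, OF r0 e gap0 small]
    have wn1: "wn c1 r1 (complex_of_real (\<beta> $ i)) = (if i \<in> S then 1 else 0)" for i
      using bc1[of i] bzero[of i] G1_excl e by (cases "i \<in> S") (auto simp: wn_def)
    have wn0: "wn c0 r0 (complex_of_real (\<beta> $ i)) = (if i \<in> S then 0 else 1)" for i
      using bc0[of i] bzero[of i] G0_encl e by (cases "i \<in> S") (auto simp: wn_def)
    have w00: "wn c0 r0 0 = 1" using G0_encl by (simp add: wn_def)
    have w10: "wn c1 r1 0 = 0" using G1_excl by (simp add: wn_def)
    have bnz: "complex_of_real (\<beta> $ i) \<noteq> 0" if "i \<in> S" for i using bpos[OF that] by simp
    have T1: "(\<chi> i j. (if i = j then wn c1 r1 (complex_of_real (\<beta> $ i)) else 0) +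
          E $ i $ j * ((wn c1 r1 (complex_of_real (\<beta> $ i)) - wn c1 r1 (complex_of_real (\<beta> $ j))) /
                       (complex_of_real (\<beta> $ i) - complex_of_real (\<beta> $ j)))) = approx_P1 S \<beta> E"
      unfolding approx_P1_def vec_eq_iff
      using bzero bnz herm by (auto simp: wn1 w10 vec_eq_iff)
    have T0: "(\<chi> i j. (if i = j then wn c0 r0 (complex_of_real (\<beta> $ i)) else 0) +
          E $ i $ j * ((wn c0 r0 (complex_of_real (\<beta> $ i)) - wn c0 r0 (complex_of_real (\<beta> $ j))) /
                       (complex_of_real (\<beta> $ i) - complex_of_real (\<beta> $ j)))) = approx_P0 S \<beta> E"
      unfolding approx_P0_def vec_eq_iff
      using bzero bnz herm by (auto simp: wn0 w00 vec_eq_iff)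
    have Ki: "C * (norm E)\<^sup>2 * r \<le> C * (r0 + r1) * (norm E)\<^sup>2" if "r \<le> r0 + r1" for r
      using that Cpos by (simp add: mult_left_mono mult_right_mono mult_ac)
    show "\<forall>z \<in> path_image (circlepath c0 r0) \<union> path_image (circlepath c1 r1).
               invertible (mat z - (diag_real \<beta> + E))"
      using M1 M0 by blast
    show "norm (riesz_proj (circlepath c1 r1) (diag_real \<beta> + E) - approx_P1 S \<beta> E) \<le> C * (r0 + r1) * (norm E)\<^sup>2"
    proof -
      have "norm (riesz_proj (circlepath c1 r1) (diag_real \<beta> + E) - approx_P1 S \<beta> E) \<le> C * (norm E)\<^sup>2 * r1"
        using conjunct2[OF M1] unfolding T1 C_def N_def .
      also have "\<dots> \<le> C * (r0 + r1) * (norm E)\<^sup>2" using Ki[of r1] r0 by simp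
      finally show ?thesis .
    qed
    show "norm (riesz_proj (circlepath c0 r0) (diag_real \<beta> + E) - approx_P0 S \<beta> E) \<le> C * (r0 + r1) * (norm E)\<^sup>2"
    proof -
      have "norm (riesz_proj (circlepath c0 r0) (diag_real \<beta> + E) - approx_P0 S \<beta> E) \<le> C * (norm E)\<^sup>2 * r0"
        using conjunct2[OF M0] unfolding T0 C_def N_def .
      also have "\<dots> \<le> C * (r0 + r1) * (norm E)\<^sup>2" using Ki[of r0] r1 by simp
      finally show ?thesis .
    qed
  qed
qed

end
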